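(* Let $Q^f$ be a kernel operator on $\mathcal{X}$ satisfying Assumptions 1, 2 and 3. Then $(Q^f)^3$ is a compact operator on $L^\infty_W(\mathcal{X})$.
   Context: $\mathcal{X}$ is a Polish space and $\mathcal{P}(\mathcal{X})$ denotes the set of probability measures on $\mathcal{X}$. A kernel operator $Q^f$ on $\mathcal{X}$ is a map such that for every $x\in\mathcal{X}$, $Q^f(x,\cdot)$ is a positive measure of finite mass, and for every measurable $A\subset\mathcal{X}$, $x\mapsto Q^f(x,A)$ is measurable; one writes $(Q^f\varphi)(x)=\int_{\mathcal{X}}\varphi(y)\,Q^f(x,dy)$, $\mu(\varphi)=\int\varphi\,d\mu$, and $\mathbb{1}$ for the constant function $1$. $(K_n)_{n\geq1}$ is a fixed increasing sequence of compact subsets of $\mathcal{X}$ such that every compact $K\subset\mathcal{X}$ is contained in some $K_m$. For $W:\mathcal{X}\to[1,+\infty)$, $L^\infty_W(\mathcal{X})$ is the Banach space of measurable $\varphi$ with $\|\varphi\|_{L^\infty_W}:=\sup_{x}|\varphi(x)|/W(x)<+\infty$. Assumption 1 (Lyapunov): there exist $W:\mathcal{X}\to[1,+\infty)$ bounded on compact sets and positive sequences $(\gamma_n)_{n\ge1}$, $(b_n)_{n\ge1}$ with $\gamma_n\to0$ such that for all $n\geq1$, $Q^fW\leq \gamma_n W+b_n\mathbb{1}_{K_n}$ pointwise. Assumption 2 (minorization and irreducibility): for each $n\geq1$ there exist $\eta_n\in\mathcal{P}(\mathcal{X})$ and $\alpha_n>0$ such that $Q^f(x,\cdot)\geq\alpha_n\eta_n(\cdot)$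 (as measures) for all $x\in K_n$; moreover, for any $n_0\geq1$ and any $\varphi\in L^\infty_W(\mathcal{X})$ with $\varphi\geq0$, if $\eta_n(\varphi)=0$ for all $n\geq n_0$, then $(Q^f\varphi)(x)=0$ for all $x\in\mathcal{X}$. Assumption 3 (local regularity): for every $n\geq1$ and every measurable function $\varphi$ bounded on $K_n$, the function $Q^f(\varphi\mathbb{1}_{K_n})$ is continuous on $K_n$. *)

theory Defs
  imports "HOL-Analysis.Analysis" "HOL-Probability.Probability"
begin

definition kernel_op :: "('a::topological_space \<Rightarrow> 'a measure) \<Rightarrow> bool" where
  "kernel_op Q \<longleftrightarrow>
     (\<forall>x. sets (Q x) = sets borel \<and> finite_measure (Q x)) \<and>
     (\<forall>A\<in>sets borel. (\<lambda>x. emeasure (Q x) A) \<in> borel_measurable borel)"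

definition kop :: "('a \<Rightarrow> 'a measure) \<Rightarrow> ('a \<Rightarrow> real) \<Rightarrow> 'a \<Rightarrow> real" where
  "kop Q \<phi> = (\<lambda>x. \<integral>y. \<phi> y \<partial>(Q x))"

definition LinfW :: "('a::topological_space \<Rightarrow> real) \<Rightarrow> ('a \<Rightarrow> real) set" where
  "LinfW W = {\<phi>. \<phi> \<in> borel_measurable borel \<and> (\<exists>C. \<forall>x. \<bar>\<phi> x\<bar> \<le> C * W x)}"

definition normW :: "('a \<Rightarrow> real) \<Rightarrow> ('a \<Rightarrow> real) \<Rightarrow> real" where
  "normW W \<phi> = (SUP x. \<bar>\<phi> x\<bar> / W x)"

definition compact_opW :: "('a::topological_space \<Rightarrow> real) \<Rightarrow> (('a \<Rightarrow> real) \<Rightarrow> ('a \<Rightarrow> real)) \<Rightarrow> bool" where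
  "compact_opW W T \<longleftrightarrow>
     (\<forall>\<phi>\<in>LinfW W. T \<phi> \<in> LinfW W) \<and>
     (\<forall>(f::nat \<Rightarrow> 'a \<Rightarrow> real) B. (\<forall>n. f n \<in> LinfW W \<and> normW W (f n) \<le> B) \<longrightarrow>
        (\<exists>r \<psi>. strict_mono r \<and> \<psi> \<in> LinfW W \<and>
           (\<lambda>n. normW W (T (f (r n)) - \<psi>)) \<longlonglongrightarrow> 0))"

end

theory Submission
  imports Defs
begin



locale qsetting =
  fixes Q :: "'a::polish_space \<Rightarrow> 'a measure"
    and K :: "nat \<Rightarrow> 'a set"
    and W :: "'a \<Rightarrow> real"
    and \<gamma> b :: "nat \<Rightarrow> real"
  assumes kernel: "kernel_op Q"
    and K_compact: "\<And>n. n \<ge> 1 \<Longrightarrow> compact (K n)"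
    and W_ge1: "\<And>x. W x \<ge> 1"
    and W_meas: "W \<in> borel_measurable borel"
    and W_bdd: "\<And>C. compact C \<Longrightarrow> bounded (W ` C)"
    and \<gamma>_pos: "\<And>n. n \<ge> 1 \<Longrightarrow> \<gamma> n > 0"
    and b_pos: "\<And>n. n \<ge> 1 \<Longrightarrow> b n > 0"
    and \<gamma>_lim: "\<gamma> \<longlonglongrightarrow> 0"
    and lyap: "\<And>n x. n \<ge> 1 \<Longrightarrow>
        (\<integral>\<^sup>+ y. ennreal (W y) \<partial>(Q x)) \<le> ennreal (\<gamma> n * W x + b n * indicator (K n) x)"
begin

lemma sets_Q[simp, measurable_cong]: "sets (Q x) = sets borel"
  using kernel unfolding kernel_op_def by auto

lemma space_Q[simp]: "space (Q x) = UNIV"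
  using sets_eq_imp_space_eq[OF sets_Q] by simp

lemma finite_Q: "finite_measure (Q x)"
  using kernel unfolding kernel_op_def by auto

lemma emeasure_Q_meas: "A \<in> sets borel \<Longrightarrow> (\<lambda>x. emeasure (Q x) A) \<in> borel_measurable borel"
  using kernel unfolding kernel_op_def by auto

lemma W_pos: "W x > 0" using W_ge1[of x] by simp

lemma W_nonneg: "W x \<ge> 0" using W_ge1[of x] by simp

lemma meas_Q: "f \<in> borel_measurable borel \<Longrightarrow> f \<in> borel_measurable (Q x)"
  using measurable_cong_sets[OF sets_Q[of x, symmetric] refl] by simp

lemma W_meas_Q: "W \<in> borel_measurable (Q x)" by (rule meas_Q[OF W_meas])

lemma nn_meas:
  fixes f :: "'a \<Rightarrow> ennreal"
  assumes f: "f \<in> borel_measurable borel"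
  shows "(\<lambda>x. \<integral>\<^sup>+y. f y \<partial>Q x) \<in> borel_measurable borel"
  using f
proof induct
  case (cong f g)
  moreover have "(\<lambda>x. \<integral>\<^sup>+y. f y \<partial>Q x) = (\<lambda>x. \<integral>\<^sup>+y. g y \<partial>Q x)"
    using cong by (intro ext nn_integral_cong) auto
  ultimately show ?case by simp
next
  case (set A)
  then have "(\<lambda>x. \<integral>\<^sup>+y. indicator A y \<partial>Q x) = (\<lambda>x. emeasure (Q x) A)"
    by (intro ext nn_integral_indicator) simp
  with set show ?case using emeasure_Q_meas by simp
next
  case (mult f c)
  then have "(\<lambda>x. \<integral>\<^sup>+y. c * f y \<partial>Q x) = (\<lambda>x. c * \<integral>\<^sup>+y. f y \<partial>Q x)"
    by (intro ext nn_integral_cmult) auto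
  with mult show ?case by simp
next
  case (add f g)
  then have "(\<lambda>x. \<integral>\<^sup>+y. g y + f y \<partial>Q x) = (\<lambda>x. (\<integral>\<^sup>+y. g y \<partial>Q x) + (\<integral>\<^sup>+y. f y \<partial>Q x))"
    by (intro ext nn_integral_add) auto
  with add show ?case by simp
next
  case (seq F)
  then have "(\<lambda>x. \<integral>\<^sup>+y. (SUP i. F i) y \<partial>Q x) = (\<lambda>x. SUP i. (\<integral>\<^sup>+y. F i y \<partial>Q x))"
    unfolding SUP_apply
    by (intro ext nn_integral_monotone_convergence_SUP) auto
  with seq show ?case by simp
qed

definition c0 where "c0 = \<gamma> 1 + b 1"

lemma c0_pos: "c0 > 0" unfolding c0_def using \<gamma>_pos[of 1] b_pos[of 1] by simp

lemma nnW_le: "(\<integral>\<^sup>+ y. ennreal (W y) \<partial>(Q x)) \<le> ennreal (c0 * W x)"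
proof -
  have "\<gamma> 1 * W x + b 1 * indicator (K 1) x \<le> c0 * W x"
    using W_ge1[of x] b_pos[of 1] \<gamma>_pos[of 1]
    by (auto simp: c0_def indicator_def algebra_simps intro: order_trans[of _ "b 1 * W x"])
  then show ?thesis using lyap[of 1 x] by (meson ennreal_leI order_trans le_refl)
qed

lemma integrable_W: "integrable (Q x) W"
proof -
  interpret finite_measure "Q x" by (rule finite_Q)
  show ?thesis
    using nnW_le[of x] W_nonneg W_meas_Q
    by (intro integrableI_nonneg) (auto intro: le_less_trans)
qed

lemma integrable_dom:
  assumes "f \<in> borel_measurable borel" "\<And>y. \<bar>f y\<bar> \<le> C * W y"
  shows "integrable (Q x) f"
proof -
  have "integrable (Q x) (\<lambda>y. C * W y)" using integrable_W by simp
  then show ?thesis by (rule Bochner_Integration.integrable_bound)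
      (use assms meas_Q in \<open>auto intro!: AE_I2 intro: order_trans[OF _ abs_ge_self]\<close>)
qed

definition QW where "QW x = (\<integral>y. W y \<partial>Q x)"

lemma QW_eq: "ennreal (QW x) = (\<integral>\<^sup>+ y. ennreal (W y) \<partial>(Q x))"
  unfolding QW_def using W_nonneg integrable_W
  by (intro nn_integral_eq_integral[symmetric]) auto

lemma QW_nonneg: "QW x \<ge> 0"
  unfolding QW_def using W_nonneg by (intro integral_nonneg_AE) auto

lemma QW_le: "QW x \<le> c0 * W x"
  using nnW_le[of x] QW_eq[of x] c0_pos W_pos[of x]
  by (metis ennreal_le_iff mult_pos_pos less_imp_le)

lemma QW_tail:
  assumes "m \<ge> 1" "x \<notin> K m" shows "QW x \<le> \<gamma> m * W x"
  using lyap[of m x] assms QW_eq[of x] \<gamma>_pos[of m] W_pos[of x]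
  by (metis ennreal_le_iff mult_pos_pos less_imp_le indicator_simps(2) mult_zero_right add_0_right)

lemma C_nonneg: assumes "\<And>y. \<bar>f y\<bar> \<le> C * W y" shows "C \<ge> 0"
proof (rule ccontr)
  assume "\<not> C \<ge> 0"
  then have "C * W undefined < 0" using W_pos[of undefined] by (simp add: mult_neg_pos)
  with assms[of undefined] show False by simp
qed

lemma kop_bound:
  assumes "f \<in> borel_measurable borel" "\<And>y. \<bar>f y\<bar> \<le> C * W y"
  shows "\<bar>kop Q f x\<bar> \<le> C * QW x"
proof -
  have "\<bar>kop Q f x\<bar> \<le> (\<integral>y. \<bar>f y\<bar> \<partial>Q x)" unfolding kop_def by (rule integral_abs_bound)
  also have "\<dots> \<le> (\<integral>y. C * W y \<partial>Q x)"
    using integrable_dom[OF assms] integrable_W assms(2) by (intro integral_mono) auto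
  also have "\<dots> = C * QW x" unfolding QW_def by simp
  finally show ?thesis .
qed

lemma kop_bound2:
  assumes "f \<in> borel_measurable borel" "\<And>y. \<bar>f y\<bar> \<le> C * W y"
  shows "\<bar>kop Q f x\<bar> \<le> (C * c0) * W x"
proof -
  have "C \<ge> 0" by (rule C_nonneg[OF assms(2)])
  then have "C * QW x \<le> C * (c0 * W x)" using QW_le by (intro mult_left_mono) auto
  then show ?thesis using kop_bound[OF assms, of x] by simp
qed

lemma kop_tail:
  assumes "f \<in> borel_measurable borel" "\<And>y. \<bar>f y\<bar> \<le> C * W y" "m \<ge> 1" "x \<notin> K m"
  shows "\<bar>kop Q f x\<bar> \<le> (C * \<gamma> m) * W x"
proof -
  have "C \<ge> 0" by (rule C_nonneg[OF assms(2)])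
  then have "C * QW x \<le> C * (\<gamma> m * W x)" using QW_tail[OF assms(3,4)] by (intro mult_left_mono) auto
  then show ?thesis using kop_bound[OF assms(1,2), of x] by simp
qed

lemma kop_meas:
  assumes f: "f \<in> borel_measurable borel" "\<And>y. \<bar>f y\<bar> \<le> C * W y"
  shows "kop Q f \<in> borel_measurable borel"
proof -
  have "kop Q f = (\<lambda>x. enn2real (\<integral>\<^sup>+y. f y \<partial>Q x) - enn2real (\<integral>\<^sup>+y. ennreal (- f y) \<partial>Q x))"
    unfolding kop_def by (intro ext real_lebesgue_integral_def integrable_dom[OF f])
  moreover have "(\<lambda>y. ennreal (f y)) \<in> borel_measurable borel" "(\<lambda>y. ennreal (- f y)) \<in> borel_measurable borel"
    using f(1) by auto
  ultimately show ?thesis using nn_meas by simp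
qed

lemma LinfW_E: assumes "f \<in> LinfW W" obtains C where "f \<in> borel_measurable borel" "\<And>y. \<bar>f y\<bar> \<le> C * W y"
  using assms unfolding LinfW_def by auto

lemma kop_LinfW: assumes "f \<in> LinfW W" shows "kop Q f \<in> LinfW W"
proof -
  obtain C where f: "f \<in> borel_measurable borel" "\<And>y. \<bar>f y\<bar> \<le> C * W y" using LinfW_E[OF assms] by blast
  show ?thesis unfolding LinfW_def using kop_meas[OF f] kop_bound2[OF f] by blast
qed

end



lemma diag_bounded:
  fixes a :: "nat \<Rightarrow> nat \<Rightarrow> real"
  assumes bdd: "\<And>n k. \<bar>a n k\<bar> \<le> M n"
  shows "\<exists>d. strict_mono d \<and> (\<forall>n. convergent (\<lambda>k. a n (d k)))"
proof -
  let ?P = "\<lambda>n. \<lambda>s. convergent (\<lambda>k. a n (s k))"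
  interpret nat: subseqs ?P
  proof (unfold convergent_def, unfold subseqs_def, auto)
    fix n :: nat and s :: "nat \<Rightarrow> nat" assume s: "strict_mono s"
    have "bounded {-M n..M n}"
      using bounded_closed_interval by auto
    moreover have "\<And>k. a n (s k) \<in> {-M n..M n}"
      using bdd by (simp add: abs_le_iff minus_le_iff)
    ultimately have "\<exists>l s'. strict_mono s' \<and> ((\<lambda>k. a n (s k)) \<circ> s') \<longlonglongrightarrow> l"
      using compact_Icc compact_imp_seq_compact seq_compactE by metis
    thus "\<exists>s'. strict_mono (s'::nat\<Rightarrow>nat) \<and> (\<exists>l. (\<lambda>k. a n (s (s' k))) \<longlonglongrightarrow> l)"
      by (auto simp: comp_def)
  qed
  define d where "d = nat.diagseq"
  have subseq: "strict_mono d"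
    unfolding d_def using nat.subseq_diagseq by auto
  have rat_cnv: "?P n d" for n
  proof -
    have Pn_seqseq: "?P n (nat.seqseq (Suc n))"
      by (rule nat.seqseq_holds)
    have 1: "(\<lambda>k. a n ((nat.seqseq (Suc n) \<circ> (\<lambda>k. nat.fold_reduce (Suc n) k
      (Suc n + k))) k)) = (\<lambda>k. a n (nat.seqseq (Suc n) k)) \<circ>
      (\<lambda>k. nat.fold_reduce (Suc n) k (Suc n + k))"
      by auto
    have 2: "?P n (d \<circ> ((+) (Suc n)))"
      unfolding d_def nat.diagseq_seqseq 1
      by (intro convergent_subseq_convergent Pn_seqseq nat.subseq_diagonal_rest)
    then obtain L where 3: "(\<lambda>na. a n (d (na + Suc n))) \<longlonglongrightarrow> L"
      by (auto simp: add.commute dest: convergentD)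
    then have "(\<lambda>k. a n (d k)) \<longlonglongrightarrow> L"
      by (rule LIMSEQ_offset)
    then show ?thesis
      by (auto simp: convergent_def)
  qed
  show ?thesis using subseq rat_cnv by blast
qed

lemma convergent_approx:
  fixes a :: "nat \<Rightarrow> real"
  assumes "\<And>e. e > 0 \<Longrightarrow> \<exists>b. convergent b \<and> (\<forall>k. \<bar>a k - b k\<bar> \<le> e)"
  shows "convergent a"
proof -
  have "Cauchy a"
  proof (rule metric_CauchyI)
    fix e :: real assume "e > 0"
    then obtain b where b: "convergent b" "\<And>k. \<bar>a k - b k\<bar> \<le> e/3"
      using assms[of "e/3"] by auto
    then have "Cauchy b" using Cauchy_convergent_iff by blast
    then obtain N where N: "\<And>m n. m \<ge> N \<Longrightarrow> n \<ge> N \<Longrightarrow> dist (b m) (b n) < e/3"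
      using \<open>e > 0\<close> by (meson metric_CauchyD zero_less_divide_iff zero_less_numeral)
    show "\<exists>M. \<forall>m\<ge>M. \<forall>n\<ge>M. dist (a m) (a n) < e"
    proof (intro exI allI impI)
      fix m n assume "m \<ge> N" "n \<ge> N"
      have "dist (b m) (b n) < e/3" using N \<open>m \<ge> N\<close> \<open>n \<ge> N\<close> .
      then have "\<bar>b m - b n\<bar> < e/3" by (simp add: dist_real_def)
      then have "b m - b n < e/3" "b n - b m < e/3" unfolding abs_less_iff by linarith+
      moreover have "a m - b m \<le> e/3" "b m - a m \<le> e/3" using b(2)[of m] unfolding abs_le_iff by linarith+
      moreover have "a n - b n \<le> e/3" "b n - a n \<le> e/3" using b(2)[of n] unfolding abs_le_iff by linarith+
      ultimately have "a m - a n < e" "a n - a m < e" by linarith+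
      then show "dist (a m) (a n) < e" unfolding dist_real_def abs_less_iff by simp
    qed
  qed
  then show ?thesis using Cauchy_convergent_iff by blast
qed

lemma countable_Int_stable_generator:
  obtains G :: "'a::second_countable_topology set set"
  where "countable G" "Int_stable G" "UNIV \<in> G" "G \<subseteq> sets borel" "sigma_sets UNIV G = sets borel"
proof -
  obtain Bs :: "'a set set" where Bs: "countable Bs" "topological_basis Bs"
    using ex_countable_basis by blast
  define G where "G = Inter ` {F. finite F \<and> F \<subseteq> Bs}"
  have "countable G" unfolding G_def by (intro countable_image countable_Collect_finite_subset Bs)
  moreover have "Int_stable G"
  proof (rule Int_stableI)
    fix a b assume "a \<in> G" "b \<in> G"
    then obtain F1 F2 where "a = \<Inter>F1" "b = \<Inter>F2" "finite F1" "F1 \<subseteq> Bs" "finite F2" "F2 \<subseteq> Bs"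
      unfolding G_def by auto
    then show "a \<inter> b \<in> G" unfolding G_def by (intro image_eqI[of _ _ "F1 \<union> F2"]) auto
  qed
  moreover have "UNIV \<in> G" unfolding G_def by (intro image_eqI[of _ _ "{}"]) auto
  moreover have G_open: "A \<in> G \<Longrightarrow> open A" for A
    unfolding G_def using topological_basis_open[OF Bs(2)] by (auto intro!: open_Inter)
  then have "G \<subseteq> sets borel" by auto
  moreover have "sigma_sets UNIV G = sets borel"
  proof
    show "sigma_sets UNIV G \<subseteq> sets borel"
      using \<open>G \<subseteq> sets borel\<close> sets.sigma_algebra_axioms[of borel] by (intro sigma_algebra.sigma_sets_subset) auto
    have "Bs \<subseteq> G" unfolding G_def by (auto intro!: image_eqI[of _ _ "{b}" for b])
    have "sets borel = sets (sigma UNIV Bs)"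
      using borel_eq_countable_basis[OF Bs] by (rule arg_cong)
    also have "\<dots> = sigma_sets UNIV Bs" by (rule sets_measure_of) auto
    also have "\<dots> \<subseteq> sigma_sets UNIV G" using \<open>Bs \<subseteq> G\<close> by (rule sigma_sets_mono')
    finally show "sets borel \<subseteq> sigma_sets UNIV G" .
  qed
  ultimately show ?thesis using that by blast
qed

lemma weak_star_subseq:
  fixes \<nu> :: "'a::second_countable_topology measure" and g :: "nat \<Rightarrow> 'a \<Rightarrow> real"
  assumes fin: "finite_measure \<nu>" and sets_nu: "sets \<nu> = sets borel"
    and gm: "\<And>k. g k \<in> borel_measurable borel" and gb: "\<And>k x. \<bar>g k x\<bar> \<le> B"
  shows "\<exists>r. strict_mono r \<and> (\<forall>u. integrable \<nu> u \<longrightarrow> convergent (\<lambda>k. \<integral>x. g (r k) x * u x \<partial>\<nu>))"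
proof -
  interpret finite_measure \<nu> by (rule fin)
  have B0: "B \<ge> 0" using gb[of 0 undefined] by simp
  have gmn[measurable]: "g k \<in> borel_measurable \<nu>" for k
    by (metis gm measurable_cong_sets[OF sets_nu refl])
  have sp: "space \<nu> = UNIV" using sets_eq_imp_space_eq[OF sets_nu] by simp
  have int_gu: "integrable \<nu> (\<lambda>x. g k x * u x)" if u: "integrable \<nu> u" for u k
  proof (rule Bochner_Integration.integrable_bound[of _ "\<lambda>x. B * \<bar>u x\<bar>"])
    show "integrable \<nu> (\<lambda>x. B * \<bar>u x\<bar>)" using u by auto
    show "(\<lambda>x. g k x * u x) \<in> borel_measurable \<nu>" using u by (auto intro!: borel_measurable_integrable)
    show "AE x in \<nu>. norm (g k x * u x) \<le> norm (B * \<bar>u x\<bar>)"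
      using gb B0 by (intro AE_I2) (auto simp: abs_mult intro!: mult_right_mono)
  qed
  have diffb: "\<bar>(\<integral>x. g k x * u x \<partial>\<nu>) - (\<integral>x. g k x * v x \<partial>\<nu>)\<bar> \<le> B * (\<integral>x. \<bar>u x - v x\<bar> \<partial>\<nu>)"
    if u: "integrable \<nu> u" and v: "integrable \<nu> v" for u v k
  proof -
    have "(\<integral>x. g k x * u x \<partial>\<nu>) - (\<integral>x. g k x * v x \<partial>\<nu>) = (\<integral>x. g k x * (u x - v x) \<partial>\<nu>)"
      using int_gu[OF u] int_gu[OF v] by (simp add: right_diff_distrib)
    also have "\<bar>\<dots>\<bar> \<le> (\<integral>x. \<bar>g k x * (u x - v x)\<bar> \<partial>\<nu>)" by (rule integral_abs_bound)
    also have "\<dots> \<le> (\<integral>x. B * \<bar>u x - v x\<bar> \<partial>\<nu>)"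
    proof (rule integral_mono)
      show "integrable \<nu> (\<lambda>x. \<bar>g k x * (u x - v x)\<bar>)"
        by (intro integrable_abs int_gu Bochner_Integration.integrable_diff u v)
      show "integrable \<nu> (\<lambda>x. B * \<bar>u x - v x\<bar>)" using u v by auto
      show "\<bar>g k x * (u x - v x)\<bar> \<le> B * \<bar>u x - v x\<bar>" for x
        using gb[of k x] B0 by (simp add: abs_mult mult_right_mono)
    qed
    also have "\<dots> = B * (\<integral>x. \<bar>u x - v x\<bar> \<partial>\<nu>)" by simp
    finally show ?thesis .
  qed
  have int_ind: "A \<in> sets borel \<Longrightarrow> integrable \<nu> (indicator A :: 'a \<Rightarrow> real)" for A
    using sets_nu sp by (auto simp: integrable_indicator_iff less_top[symmetric])
  have bnd: "\<bar>\<integral>x. g k x * indicator A x \<partial>\<nu>\<bar> \<le> B * measure \<nu> (space \<nu>)" if A: "A \<in> sets borel" for k A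
  proof -
    have "\<bar>(\<integral>x. g k x * indicator A x \<partial>\<nu>) - (\<integral>x. g k x * indicator {} x \<partial>\<nu>)\<bar>
       \<le> B * (\<integral>x. \<bar>indicator A x - indicator {} x\<bar> \<partial>\<nu>)"
      using A by (intro diffb int_ind) auto
    also have "(\<integral>x. \<bar>indicator A x - indicator {} x\<bar> \<partial>\<nu>) = (\<integral>x. indicator A x \<partial>\<nu> :: real)"
      by (intro Bochner_Integration.integral_cong) (auto simp: indicator_def)
    also have "\<dots> = measure \<nu> A" using A sets_nu sp by simp
    also have "B * \<dots> \<le> B * measure \<nu> (space \<nu>)"
      using A sets_nu B0 by (intro mult_left_mono bounded_measure) auto
    finally show ?thesis by simp
  qed
  obtain G :: "'a set set" where G: "countable G" "Int_stable G" "UNIV \<in> G" "G \<subseteq> sets borel"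
    "sigma_sets UNIV G = sets borel"
    by (rule countable_Int_stable_generator)
  define e where "e = from_nat_into G"
  have "G \<noteq> {}" using G(3) by auto
  then have G_range: "range e = G" unfolding e_def using G(1) by (rule range_from_nat_into)
  define a where "a n k = (\<integral>x. g k x * indicator (e n) x \<partial>\<nu>)" for n k
  have "\<bar>a n k\<bar> \<le> B * measure \<nu> (space \<nu>)" for n k
    unfolding a_def using G_range G(4) by (intro bnd) auto
  then obtain d where d: "strict_mono d" "\<And>n. convergent (\<lambda>k. a n (d k))"
    using diag_bounded[of a "\<lambda>_. B * measure \<nu> (space \<nu>)"] by blast
  define P where "P A \<longleftrightarrow> convergent (\<lambda>k. \<integral>x. g (d k) x * indicator A x \<partial>\<nu>)" for A
  have PG: "P A" if AG: "A \<in> G" for A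
  proof -
    obtain n where "A = e n" using AG G_range by blast
    then show ?thesis unfolding P_def using d(2)[of n] by (simp add: a_def)
  qed
  have PS: "P A" if "A \<in> sets borel" for A
  proof -
    have AS: "A \<in> sigma_sets UNIV G" using that G(5) by simp
    have GP: "G \<subseteq> Pow UNIV" by auto
    show ?thesis using G(2) GP AS
    proof (induction rule: sigma_sets_induct_disjoint)
      case (basic A) then show ?case by (rule PG)
    next
      case empty show ?case unfolding P_def by (simp add: convergent_const)
    next
      case (compl A)
      note 4 = compl
      then have A: "A \<in> sets borel" using G(5) by simp
      have eq: "(\<lambda>k. (\<integral>x. g (d k) x * indicator UNIV x \<partial>\<nu>) - (\<integral>x. g (d k) x * indicator A x \<partial>\<nu>))
          = (\<lambda>k. \<integral>x. g (d k) x * indicator (UNIV - A) x \<partial>\<nu>)"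
      proof
        fix k
        have "(\<integral>x. g (d k) x * indicator UNIV x \<partial>\<nu>) - (\<integral>x. g (d k) x * indicator A x \<partial>\<nu>)
          = (\<integral>x. g (d k) x * indicator UNIV x - g (d k) x * indicator A x \<partial>\<nu>)"
          using int_gu[OF int_ind[of UNIV], of "d k"] int_gu[OF int_ind[OF A], of "d k"]
          by (intro Bochner_Integration.integral_diff[symmetric]) auto
        also have "\<dots> = (\<integral>x. g (d k) x * indicator (UNIV - A) x \<partial>\<nu>)"
          by (intro Bochner_Integration.integral_cong) (auto simp: indicator_def)
        finally show "(\<integral>x. g (d k) x * indicator UNIV x \<partial>\<nu>) - (\<integral>x. g (d k) x * indicator A x \<partial>\<nu>)
          = (\<integral>x. g (d k) x * indicator (UNIV - A) x \<partial>\<nu>)" .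
      qed
      have c1: "convergent (\<lambda>k. \<integral>x. g (d k) x * indicator UNIV x \<partial>\<nu>)"
        using PG[OF G(3)] unfolding P_def .
      have c2: "convergent (\<lambda>k. \<integral>x. g (d k) x * indicator A x \<partial>\<nu>)"
        using 4(2) unfolding P_def .
      show ?case unfolding P_def using convergent_diff[OF c1 c2] by (simp only: eq)
    next
      case (union A)
      note 5 = union
      define U where "U = (\<Union>i. A i)"
      have A: "A i \<in> sets borel" for i using 5 G(5) by auto
      define V where "V N = (\<Union>i\<in>{..<N}. A i)" for N
      have V: "V N \<in> sets \<nu>" for N unfolding V_def using A sets_nu by auto
      have U: "U \<in> sets \<nu>" unfolding U_def using A sets_nu by auto
      have VU: "V N \<subseteq> U" for N unfolding V_def U_def by auto
      have "incseq V" unfolding V_def incseq_def by (auto intro: less_le_trans)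
      moreover have "(\<Union>N. V N) = U" unfolding V_def U_def by auto
      ultimately have lim: "(\<lambda>N. measure \<nu> (V N)) \<longlonglongrightarrow> measure \<nu> U"
        using finite_Lim_measure_incseq[of V] V by auto
      have "convergent (\<lambda>k. \<integral>x. g (d k) x * indicator U x \<partial>\<nu>)"
      proof (rule convergent_approx)
        fix \<epsilon> :: real assume "\<epsilon> > 0"
        then have ep: "\<epsilon> / (B + 1) > 0" using B0 by simp
        obtain N where N: "dist (measure \<nu> (V N)) (measure \<nu> U) < \<epsilon> / (B + 1)"
          using metric_LIMSEQ_D[OF lim ep] by blast
        have mdiff: "measure \<nu> (U - V N) \<le> \<epsilon> / (B + 1)"
          using N finite_measure_Diff[OF U V VU] by (simp add: dist_real_def abs_less_iff)
        show "\<exists>b. convergent b \<and> (\<forall>k. \<bar>(\<integral>x. g (d k) x * indicator U x \<partial>\<nu>) - b k\<bar> \<le> \<epsilon>)"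
        proof (intro exI conjI allI)
          show "convergent (\<lambda>k. \<Sum>i<N. \<integral>x. g (d k) x * indicator (A i) x \<partial>\<nu>)"
            using 5 unfolding P_def by (intro convergent_sum) auto
          fix k
          have "(\<Sum>i<N. \<integral>x. g (d k) x * indicator (A i) x \<partial>\<nu>) = (\<integral>x. (\<Sum>i<N. g (d k) x * indicator (A i) x) \<partial>\<nu>)"
            by (rule Bochner_Integration.integral_sum[symmetric]) (auto intro!: int_gu int_ind A)
          also have "\<dots> = (\<integral>x. g (d k) x * indicator (V N) x \<partial>\<nu>)"
          proof (intro Bochner_Integration.integral_cong refl)
            fix x
            have "indicator (V N) x = (\<Sum>i<N. indicator (A i) x :: real)"
              unfolding V_def using 5(1) by (intro indicator_UN_disjoint) (auto simp: disjoint_family_on_def disjoint_family_on_def)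
            then show "(\<Sum>i<N. g (d k) x * indicator (A i) x) = g (d k) x * indicator (V N) x"
              by (simp add: sum_distrib_left)
          qed
          finally have eq: "(\<Sum>i<N. \<integral>x. g (d k) x * indicator (A i) x \<partial>\<nu>) = (\<integral>x. g (d k) x * indicator (V N) x \<partial>\<nu>)" .
          have "\<bar>(\<integral>x. g (d k) x * indicator U x \<partial>\<nu>) - (\<integral>x. g (d k) x * indicator (V N) x \<partial>\<nu>)\<bar>
              \<le> B * (\<integral>x. \<bar>indicator U x - indicator (V N) x\<bar> \<partial>\<nu>)"
            using U V sets_nu by (intro diffb int_ind) auto
          also have "(\<integral>x. \<bar>indicator U x - indicator (V N) x\<bar> \<partial>\<nu>) = (\<integral>x. indicator (U - V N) x \<partial>\<nu> :: real)"
            using VU by (intro Bochner_Integration.integral_cong) (auto simp: indicator_def)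
          also have "\<dots> = measure \<nu> (U - V N)" using sp by simp
          also have "B * \<dots> \<le> B * (\<epsilon> / (B + 1))" using mdiff B0 by (intro mult_left_mono) auto
          also have "\<dots> \<le> \<epsilon>" using B0 \<open>\<epsilon> > 0\<close> by (simp add: field_simps)
          finally show "\<bar>(\<integral>x. g (d k) x * indicator U x \<partial>\<nu>) - (\<Sum>i<N. \<integral>x. g (d k) x * indicator (A i) x \<partial>\<nu>)\<bar> \<le> \<epsilon>"
            unfolding eq .
        qed
      qed
      then show ?case unfolding P_def U_def .
    qed
  qed
  have "convergent (\<lambda>k. \<integral>x. g (d k) x * u x \<partial>\<nu>)" if u: "integrable \<nu> u" for u
    using u
  proof (induction rule: integrable_induct)
    case (base A c)
    have "(\<lambda>k. \<integral>x. g (d k) x * (indicator A x *\<^sub>R c) \<partial>\<nu>) = (\<lambda>k. c * \<integral>x. g (d k) x * indicator A x \<partial>\<nu>)"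
      by (auto simp: mult_ac)
    moreover have "P A" using base sets_nu by (intro PS) auto
    ultimately show ?case unfolding P_def by (simp add: convergent_mult convergent_const)
  next
    case (add f h)
    have "(\<lambda>k. \<integral>x. g (d k) x * (f x + h x) \<partial>\<nu>) = (\<lambda>k. (\<integral>x. g (d k) x * f x \<partial>\<nu>) + (\<integral>x. g (d k) x * h x \<partial>\<nu>))"
      using int_gu add by (simp add: distrib_left)
    then show ?case using add by (simp add: convergent_add)
  next
    case (lim f s)
    have "(\<lambda>i. \<integral>x. \<bar>s i x - f x\<bar> \<partial>\<nu>) \<longlonglongrightarrow> (\<integral>x. 0 \<partial>\<nu>)"
    proof (rule integral_dominated_convergence[where w="\<lambda>x. 3 * \<bar>f x\<bar>"])
      show "(\<lambda>x. 0::real) \<in> borel_measurable \<nu>" by simp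
      show "(\<lambda>x. \<bar>s i x - f x\<bar>) \<in> borel_measurable \<nu>" for i using lim by (auto intro!: borel_measurable_integrable)
      show "integrable \<nu> (\<lambda>x. 3 * \<bar>f x\<bar>)" using lim by auto
      show "AE x in \<nu>. (\<lambda>i. \<bar>s i x - f x\<bar>) \<longlonglongrightarrow> 0"
      proof (rule AE_I2)
        fix x assume x: "x \<in> space \<nu>"
        have "(\<lambda>i. s i x - f x) \<longlonglongrightarrow> f x - f x" using lim x by (intro tendsto_diff) auto
        then have "(\<lambda>i. \<bar>s i x - f x\<bar>) \<longlonglongrightarrow> \<bar>f x - f x\<bar>" by (rule tendsto_rabs)
        then show "(\<lambda>i. \<bar>s i x - f x\<bar>) \<longlonglongrightarrow> 0" by simp
      qed
      show "AE x in \<nu>. norm \<bar>s i x - f x\<bar> \<le> 3 * \<bar>f x\<bar>" for i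
      proof (rule AE_I2)
        fix x assume x: "x \<in> space \<nu>"
        have "\<bar>s i x\<bar> \<le> 2 * \<bar>f x\<bar>" using lim x by auto
        then show "norm \<bar>s i x - f x\<bar> \<le> 3 * \<bar>f x\<bar>" by simp
      qed
    qed
    then have L: "(\<lambda>i. \<integral>x. \<bar>s i x - f x\<bar> \<partial>\<nu>) \<longlonglongrightarrow> 0" by simp
    show ?case
    proof (rule convergent_approx)
      fix \<epsilon> :: real assume "\<epsilon> > 0"
      then have ep: "\<epsilon> / (B + 1) > 0" using B0 by simp
      obtain i where i: "dist (\<integral>x. \<bar>s i x - f x\<bar> \<partial>\<nu>) 0 < \<epsilon> / (B + 1)"
        using metric_LIMSEQ_D[OF L ep] by blast
      show "\<exists>b. convergent b \<and> (\<forall>k. \<bar>(\<integral>x. g (d k) x * f x \<partial>\<nu>) - b k\<bar> \<le> \<epsilon>)"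
      proof (intro exI conjI allI)
        show "convergent (\<lambda>k. \<integral>x. g (d k) x * s i x \<partial>\<nu>)" using lim by blast
        fix k
        have "\<bar>(\<integral>x. g (d k) x * f x \<partial>\<nu>) - (\<integral>x. g (d k) x * s i x \<partial>\<nu>)\<bar> \<le> B * (\<integral>x. \<bar>f x - s i x\<bar> \<partial>\<nu>)"
          using lim by (intro diffb) auto
        also have "(\<integral>x. \<bar>f x - s i x\<bar> \<partial>\<nu>) = (\<integral>x. \<bar>s i x - f x\<bar> \<partial>\<nu>)" by (simp add: abs_minus_commute)
        also have "B * \<dots> \<le> B * (\<epsilon> / (B + 1))" using i B0 by (intro mult_left_mono) (auto simp: dist_real_def)
        also have "\<dots> \<le> \<epsilon>" using B0 \<open>\<epsilon> > 0\<close> by (simp add: field_simps)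
        finally show "\<bar>(\<integral>x. g (d k) x * f x \<partial>\<nu>) - (\<integral>x. g (d k) x * s i x \<partial>\<nu>)\<bar> \<le> \<epsilon>" .
      qed
    qed
  qed
  then show ?thesis using d(1) by blast
qed




locale qsetting2 = qsetting Q K W \<gamma> b
  for Q :: "'a::polish_space \<Rightarrow> 'a measure" and K W \<gamma> b +
  fixes \<eta> :: "nat \<Rightarrow> 'a measure"
  assumes \<eta>_prob: "\<And>n. n \<ge> 1 \<Longrightarrow> prob_space (\<eta> n) \<and> sets (\<eta> n) = sets borel"
    and irred: "\<And>n0 \<phi>. n0 \<ge> 1 \<Longrightarrow> \<phi> \<in> LinfW W \<Longrightarrow> (\<forall>x. \<phi> x \<ge> 0) \<Longrightarrow>
        (\<forall>n\<ge>n0. (\<integral>\<^sup>+ y. ennreal (\<phi> y) \<partial>(\<eta> n)) = 0) \<Longrightarrow>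
        (\<forall>x. kop Q \<phi> x = 0)"
begin

definition nu where "nu = measure_pmf (geometric_pmf (1/2)) \<bind> (\<lambda>n. \<eta> (Suc n))"

lemma eta_meas: "(\<lambda>n. \<eta> (Suc n)) \<in> measure_pmf (geometric_pmf (1/2)) \<rightarrow>\<^sub>M subprob_algebra borel"
  using \<eta>_prob by (auto simp: space_subprob_algebra prob_space_imp_subprob_space)

lemma sets_nu: "sets nu = sets borel"
  unfolding nu_def using \<eta>_prob by (intro sets_bind) auto

lemma space_nu: "space nu = UNIV"
  using sets_eq_imp_space_eq[OF sets_nu] by simp

lemma finite_nu: "finite_measure nu"
proof -
  have "subprob_space nu" unfolding nu_def
    by (rule subprob_space_bind[OF _ eta_meas]) (simp add: subprob_space_measure_pmf)
  then show ?thesis by (simp add: subprob_space_def)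
qed

lemma nu_null:
  assumes A: "A \<in> sets borel" "emeasure nu A = 0"
  shows "emeasure (\<eta> (Suc n)) A = 0"
proof -
  have "(\<integral>\<^sup>+m. emeasure (\<eta> (Suc m)) A \<partial>measure_pmf (geometric_pmf (1/2))) = 0"
    using A emeasure_bind[OF _ eta_meas, of A] unfolding nu_def by simp
  then have "AE m in measure_pmf (geometric_pmf (1/2)). emeasure (\<eta> (Suc m)) A = 0"
    by (subst (asm) nn_integral_0_iff_AE) auto
  then show ?thesis by (simp add: AE_measure_pmf_iff set_pmf_geometric)
qed

lemma Q_ac: "absolutely_continuous nu (Q x)"
  unfolding absolutely_continuous_def
proof
  fix A assume "A \<in> null_sets nu"
  then have A: "A \<in> sets borel" "emeasure nu A = 0" using sets_nu by auto
  have "indicator A \<in> LinfW W"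
    unfolding LinfW_def using A W_ge1 W_nonneg by (auto intro!: exI[of _ 1] simp: indicator_def)
  moreover have "\<forall>n\<ge>1. (\<integral>\<^sup>+ y. ennreal (indicator A y) \<partial>(\<eta> n)) = 0"
  proof (intro allI impI)
    fix n :: nat assume "n \<ge> 1"
    then obtain m where n: "n = Suc m" by (cases n) auto
    have "(\<integral>\<^sup>+ y. ennreal (indicator A y) \<partial>(\<eta> n)) = emeasure (\<eta> n) A"
      using A \<eta>_prob[of n] \<open>n \<ge> 1\<close> by (simp add: ennreal_indicator nn_integral_indicator)
    also have "\<dots> = 0" using nu_null[OF A, of m] n by simp
    finally show "(\<integral>\<^sup>+ y. ennreal (indicator A y) \<partial>(\<eta> n)) = 0" .
  qed
  ultimately have "kop Q (indicator A) x = 0" using irred[of 1 "indicator A"] by auto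
  then have "measure (Q x) A = 0" unfolding kop_def by simp
  then have "emeasure (Q x) A = 0"
    using finite_measure.emeasure_eq_measure[OF finite_Q] by simp
  then show "A \<in> null_sets (Q x)" using A by auto
qed

lemma Q_density:
  obtains D :: "'a \<Rightarrow> real" where "D \<in> borel_measurable borel" "\<And>y. D y \<ge> 0"
    "\<And>f. f \<in> borel_measurable borel \<Longrightarrow> integrable (Q x) f \<longleftrightarrow> integrable nu (\<lambda>y. D y * f y)"
    "\<And>f. f \<in> borel_measurable borel \<Longrightarrow> integral\<^sup>L (Q x) f = (\<integral>y. D y * f y \<partial>nu)"
proof -
  interpret finite_measure nu by (rule finite_nu)
  have sQ: "sets (Q x) = sets nu" using sets_nu by simp
  obtain D where D: "D \<in> borel_measurable nu" "AE y in nu. RN_deriv nu (Q x) y = ennreal (D y)" "\<And>y. 0 \<le> D y"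
    using real_RN_deriv[OF finite_Q Q_ac sQ] by metis
  have Dm: "D \<in> borel_measurable borel" using D(1) measurable_cong_sets[OF sets_nu refl] by metis
  have "Q x = density nu (RN_deriv nu (Q x))" using density_RN_deriv[OF Q_ac sQ] by simp
  also have "\<dots> = density nu (\<lambda>y. ennreal (D y))"
    using D by (intro density_cong) auto
  finally have Qd: "Q x = density nu (\<lambda>y. ennreal (D y))" .
  have mf: "f \<in> borel_measurable nu" if "f \<in> borel_measurable borel" for f :: "'a \<Rightarrow> real"
    using that measurable_cong_sets[OF sets_nu refl] by metis
  show ?thesis
  proof (rule that)
    show "D \<in> borel_measurable borel" by (rule Dm)
    show "\<And>y. 0 \<le> D y" by (rule D(3))
  next
    fix f :: "'a \<Rightarrow> real" assume f: "f \<in> borel_measurable borel"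
    show "integrable (Q x) f \<longleftrightarrow> integrable nu (\<lambda>y. D y * f y)"
      by (subst Qd) (simp add: integrable_density mf[OF f] D)
  next
    fix f :: "'a \<Rightarrow> real" assume f: "f \<in> borel_measurable borel"
    show "integral\<^sup>L (Q x) f = (\<integral>y. D y * f y \<partial>nu)"
      by (subst Qd) (simp add: integral_density mf[OF f] D)
  qed
qed

end



context qsetting2 begin

lemma pointwise_subseq:
  fixes f :: "nat \<Rightarrow> 'a \<Rightarrow> real"
  assumes fm: "\<And>k. f k \<in> borel_measurable borel" and fb: "\<And>k y. \<bar>f k y\<bar> \<le> B * W y"
  shows "\<exists>r. strict_mono r \<and> (\<forall>x. convergent (\<lambda>k. kop Q (f (r k)) x))"
proof -
  define g where "g k y = f k y / W y" for k y
  have gm: "g k \<in> borel_measurable borel" for k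
    unfolding g_def using fm W_meas by (intro borel_measurable_divide) auto
  have gb: "\<bar>g k y\<bar> \<le> B" for k y
    using fb[of k y] W_pos[of y] by (simp add: g_def abs_divide pos_divide_le_eq)
  from weak_star_subseq[of nu g B, OF finite_nu sets_nu gm gb] obtain r where r: "strict_mono r"
    "\<forall>u. integrable nu u \<longrightarrow> convergent (\<lambda>k. \<integral>y. g (r k) y * u y \<partial>nu)"
    by (elim exE conjE) (rule that)
  have "convergent (\<lambda>k. kop Q (f (r k)) x)" for x
  proof -
    obtain D :: "'a \<Rightarrow> real" where D: "D \<in> borel_measurable borel" "\<And>y. D y \<ge> 0"
      "\<And>f. f \<in> borel_measurable borel \<Longrightarrow> integrable (Q x) f \<longleftrightarrow> integrable nu (\<lambda>y. D y * f y)"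
      "\<And>f. f \<in> borel_measurable borel \<Longrightarrow> integral\<^sup>L (Q x) f = (\<integral>y. D y * f y \<partial>nu)"
      using Q_density[of x] by metis
    have u: "integrable nu (\<lambda>y. D y * W y)" using D(3)[OF W_meas] integrable_W by simp
    have "(\<lambda>k. \<integral>y. g (r k) y * (D y * W y) \<partial>nu) = (\<lambda>k. kop Q (f (r k)) x)"
    proof
      fix k
      have "(\<integral>y. g (r k) y * (D y * W y) \<partial>nu) = (\<integral>y. D y * f (r k) y \<partial>nu)"
        using W_pos by (intro Bochner_Integration.integral_cong) (auto simp: g_def field_simps less_imp_neq[symmetric])
      also have "\<dots> = kop Q (f (r k)) x" unfolding kop_def using D(4)[OF fm] by simp
      finally show "(\<integral>y. g (r k) y * (D y * W y) \<partial>nu) = kop Q (f (r k)) x" .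
    qed
    then show ?thesis using r(2)[rule_format, OF u] by simp
  qed
  then show ?thesis using r(1) by blast
qed

end



locale qsetting3 = qsetting2 Q K W \<gamma> b \<eta>
  for Q :: "'a::polish_space \<Rightarrow> 'a measure" and K W \<gamma> b \<eta> +
  assumes regular: "\<And>n \<phi>. n \<ge> 1 \<Longrightarrow> \<phi> \<in> borel_measurable borel \<Longrightarrow> bounded (\<phi> ` K n) \<Longrightarrow>
        continuous_on (K n) (kop Q (\<lambda>y. \<phi> y * indicator (K n) y))"
begin

lemma unif_Km:
  fixes G :: "nat \<Rightarrow> 'a \<Rightarrow> real" and Gl :: "'a \<Rightarrow> real"
  assumes m: "m \<ge> 1" and Gm: "\<And>i. G i \<in> borel_measurable borel" and Glm: "Gl \<in> borel_measurable borel"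
    and Gb: "\<And>i y. \<bar>G i y\<bar> \<le> C * W y" and Glb: "\<And>y. \<bar>Gl y\<bar> \<le> C * W y"
    and conv: "\<And>y. (\<lambda>i. G i y) \<longlonglongrightarrow> Gl y"
    and eps: "\<epsilon> > 0"
  shows "\<exists>N. \<forall>k\<ge>N. \<forall>x\<in>K m. \<bar>kop Q (\<lambda>y. (G k y - Gl y) * indicator (K m) y) x\<bar> < \<epsilon>"
proof -
  obtain Mw where Mw: "\<And>y. y \<in> K m \<Longrightarrow> W y \<le> Mw"
    using W_bdd[OF K_compact[OF m]] unfolding bounded_iff by (auto simp: abs_le_iff)
  have C0: "C \<ge> 0" by (rule C_nonneg[OF Glb])
  have db: "\<bar>G i y - Gl y\<bar> \<le> (2 * C) * W y" for i y
    using Gb[of i y] Glb[of y] by simp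
  define S where "S N y = (SUP i\<in>{N..}. \<bar>G i y - Gl y\<bar>)" for N y
  have bddS: "bdd_above ((\<lambda>i. \<bar>G i y - Gl y\<bar>) ` {N..})" for N y
    using db by (auto intro!: bdd_aboveI[of _ "(2 * C) * W y"])
  have S_ge: "\<bar>G i y - Gl y\<bar> \<le> S N y" if "i \<ge> N" for i N y
    unfolding S_def using that bddS by (intro cSUP_upper) auto
  have S_le: "S N y \<le> (2 * C) * W y" for N y
    unfolding S_def using db by (intro cSUP_least) auto
  have S_nonneg: "S N y \<ge> 0" for N y using S_ge[of N N y] by simp
  have Sm: "S N \<in> borel_measurable borel" for N
    unfolding S_def using Gm Glm bddS by (intro borel_measurable_cSUP) auto
  define h where "h N y = S N y * indicator (K m) y" for N y
  have hm: "h N \<in> borel_measurable borel" for N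
    unfolding h_def using Sm K_compact[OF m] by (intro borel_measurable_times borel_measurable_indicator) (auto intro: compact_imp_closed borel_closed)
  have hb: "\<bar>h N y\<bar> \<le> (2 * C) * W y" for N y
    using S_le[of N y] S_nonneg[of N y] C0 W_nonneg[of y] by (auto simp: h_def indicator_def)
  let ?d = "\<lambda>k. \<lambda>y. (G k y - Gl y) * indicator (K m) y"
  have dm: "?d k \<in> borel_measurable borel" for k
    using Gm Glm K_compact[OF m] by (intro borel_measurable_times borel_measurable_indicator borel_measurable_diff) (auto intro: compact_imp_closed borel_closed)
  have d_le: "\<bar>kop Q (?d k) x\<bar> \<le> kop Q (h N) x" if "k \<ge> N" for k N x
  proof -
    have "\<bar>kop Q (?d k) x\<bar> \<le> (\<integral>y. \<bar>?d k y\<bar> \<partial>Q x)" unfolding kop_def by (rule integral_abs_bound)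
    also have "\<dots> \<le> kop Q (h N) x" unfolding kop_def
    proof (rule integral_mono)
      show "integrable (Q x) (\<lambda>y. \<bar>?d k y\<bar>)"
        by (intro integrable_abs integrable_dom[OF dm, of k "2 * C"]) (use db C0 W_nonneg in \<open>auto simp: indicator_def abs_mult\<close>)
      show "integrable (Q x) (h N)" by (rule integrable_dom[OF hm hb])
      show "\<bar>?d k y\<bar> \<le> h N y" for y using S_ge[OF that, of y] by (auto simp: h_def indicator_def)
    qed
    finally show ?thesis .
  qed
  have hlim: "(\<lambda>N. kop Q (h N) x) \<longlonglongrightarrow> 0" for x
  proof -
    have "(\<lambda>N. kop Q (h N) x) \<longlonglongrightarrow> (\<integral>y. 0 \<partial>Q x)"
      unfolding kop_def
    proof (rule integral_dominated_convergence[where w="\<lambda>y. (2 * C) * W y"])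
      show "(\<lambda>y. 0::real) \<in> borel_measurable (Q x)" by simp
      show "h N \<in> borel_measurable (Q x)" for N by (rule meas_Q[OF hm])
      show "integrable (Q x) (\<lambda>y. (2 * C) * W y)" using integrable_W by simp
      show "AE y in Q x. norm (h N y) \<le> (2 * C) * W y" for N using hb by (intro AE_I2) simp
      show "AE y in Q x. (\<lambda>N. h N y) \<longlonglongrightarrow> 0"
      proof (rule AE_I2)
        fix y
        show "(\<lambda>N. h N y) \<longlonglongrightarrow> 0"
        proof (rule LIMSEQ_I)
          fix r :: real assume r: "r > 0"
          obtain N0 where N0: "\<And>i. i \<ge> N0 \<Longrightarrow> dist (G i y) (Gl y) < r / 2"
            using metric_LIMSEQ_D[OF conv[of y], of "r/2"] r by auto
          show "\<exists>no. \<forall>n\<ge>no. norm (h n y - 0) < r"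
          proof (intro exI allI impI)
            fix n assume "n \<ge> N0"
            have "S n y \<le> r / 2" unfolding S_def
              using N0 \<open>n \<ge> N0\<close> by (intro cSUP_least) (auto simp: dist_real_def less_imp_le)
            then show "norm (h n y - 0) < r" using S_nonneg[of n y] r by (auto simp: h_def indicator_def)
          qed
        qed
      qed
    qed
    then show ?thesis by simp
  qed
  have hcont: "continuous_on (K m) (kop Q (h N))" for N
  proof -
    have "S N y \<le> (2 * C) * Mw" if "y \<in> K m" for y
      using S_le[of N y] Mw[OF that] C0 by (meson order_trans mult_left_mono zero_le_mult_iff zero_le_numeral)
    then have "bounded (S N ` K m)" unfolding bounded_iff
      using S_nonneg by (intro exI[of _ "(2 * C) * Mw"]) auto
    then have "continuous_on (K m) (kop Q (\<lambda>y. S N y * indicator (K m) y))" by (intro regular m Sm)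
    then show ?thesis unfolding h_def .
  qed
  show ?thesis
  proof (rule ccontr)
    assume "\<not> ?thesis"
    then have "\<forall>N. \<exists>k\<ge>N. \<exists>x\<in>K m. \<epsilon> \<le> \<bar>kop Q (?d k) x\<bar>" by (auto simp: not_less)
    then obtain kk xx where kk: "\<And>N. kk N \<ge> N" "\<And>N. xx N \<in> K m" "\<And>N. \<epsilon> \<le> \<bar>kop Q (?d (kk N)) (xx N)\<bar>"
      by metis
    obtain l \<sigma> where l: "l \<in> K m" "strict_mono \<sigma>" "(xx \<circ> \<sigma>) \<longlonglongrightarrow> l"
      using seq_compactE[OF compact_imp_seq_compact[OF K_compact[OF m]], of xx] kk(2) by blast
    obtain N0 where N0: "dist (kop Q (h N0) l) 0 < \<epsilon> / 2"
      using metric_LIMSEQ_D[OF hlim[of l], of "\<epsilon>/2"] eps by auto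
    have "(\<lambda>j. kop Q (h N0) ((xx \<circ> \<sigma>) j)) \<longlonglongrightarrow> kop Q (h N0) l"
      by (rule continuous_on_tendsto_compose[OF hcont l(3) l(1)]) (use kk(2) in auto)
    then obtain J where J: "\<And>j. j \<ge> J \<Longrightarrow> dist (kop Q (h N0) ((xx \<circ> \<sigma>) j)) (kop Q (h N0) l) < \<epsilon> / 2"
      using metric_LIMSEQ_D[of _ "kop Q (h N0) l" "\<epsilon>/2"] eps by (metis half_gt_zero)
    define j where "j = max J N0"
    have "N0 \<le> \<sigma> j" using seq_suble[OF l(2), of j] unfolding j_def by simp
    then have "N0 \<le> kk (\<sigma> j)" using kk(1)[of "\<sigma> j"] by simp
    then have "\<epsilon> \<le> kop Q (h N0) (xx (\<sigma> j))" using kk(3)[of "\<sigma> j"] d_le by (meson order_trans)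
    moreover have "kop Q (h N0) (xx (\<sigma> j)) < \<epsilon>"
    proof -
      have A1: "\<bar>kop Q (h N0) (xx (\<sigma> j)) - kop Q (h N0) l\<bar> < \<epsilon> / 2"
        using J[of j] unfolding j_def by (simp add: dist_real_def)
      have A2: "\<bar>kop Q (h N0) l\<bar> < \<epsilon> / 2" using N0 by (simp add: dist_real_def)
      show ?thesis using A1 A2 unfolding abs_less_iff by linarith
    qed
    ultimately show False by simp
  qed
qed

end



context qsetting3 begin

lemma kop_diff:
  assumes "f \<in> borel_measurable borel" "\<And>y. \<bar>f y\<bar> \<le> C * W y"
    and "g \<in> borel_measurable borel" "\<And>y. \<bar>g y\<bar> \<le> D * W y"
  shows "kop Q (\<lambda>y. f y - g y) x = kop Q f x - kop Q g x"
  unfolding kop_def using integrable_dom[OF assms(1,2)] integrable_dom[OF assms(3,4)] by simp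

lemma kop_add:
  assumes "f \<in> borel_measurable borel" "\<And>y. \<bar>f y\<bar> \<le> C * W y"
    and "g \<in> borel_measurable borel" "\<And>y. \<bar>g y\<bar> \<le> D * W y"
  shows "kop Q (\<lambda>y. f y + g y) x = kop Q f x + kop Q g x"
  unfolding kop_def using integrable_dom[OF assms(1,2)] integrable_dom[OF assms(3,4)] by simp

lemma main_seq:
  fixes f :: "nat \<Rightarrow> 'a \<Rightarrow> real"
  assumes fm: "\<And>k. f k \<in> borel_measurable borel" and fb: "\<And>k y. \<bar>f k y\<bar> \<le> B * W y"
  shows "\<exists>r \<psi>. strict_mono r \<and> \<psi> \<in> LinfW W \<and>
           (\<lambda>n. normW W (kop Q (kop Q (kop Q (f (r n)))) - \<psi>)) \<longlonglongrightarrow> 0"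
proof -
  have B0: "B \<ge> 0" by (rule C_nonneg[OF fb[of 0]])
  obtain r where r: "strict_mono r" "\<And>x. convergent (\<lambda>k. kop Q (f (r k)) x)"
    using pointwise_subseq[where f=f and B=B, OF fm fb] by blast
  define F where "F k = kop Q (f (r k))" for k
  define Fl where "Fl y = lim (\<lambda>k. F k y)" for y
  have Flim: "(\<lambda>k. F k y) \<longlonglongrightarrow> Fl y" for y
    unfolding Fl_def F_def using r(2) convergent_LIMSEQ_iff by blast
  have Fm: "F k \<in> borel_measurable borel" for k unfolding F_def by (rule kop_meas[OF fm fb])
  have Fb: "\<bar>F k y\<bar> \<le> (B * c0) * W y" for k y unfolding F_def by (rule kop_bound2[OF fm fb])
  have Flm: "Fl \<in> borel_measurable borel"
    by (rule borel_measurable_LIMSEQ_real[OF Flim Fm])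
  have Flb: "\<bar>Fl y\<bar> \<le> (B * c0) * W y" for y
  proof -
    have "(\<lambda>k. \<bar>F k y\<bar>) \<longlonglongrightarrow> \<bar>Fl y\<bar>" by (rule tendsto_rabs[OF Flim])
    then show ?thesis using Fb by (intro LIMSEQ_le_const2) auto
  qed
  define C2 where "C2 = B * c0 * c0"
  have C2: "C2 \<ge> 0" unfolding C2_def using B0 c0_pos by simp
  define G where "G k = kop Q (F k)" for k
  define Gl where "Gl = kop Q Fl"
  have Gm: "G k \<in> borel_measurable borel" for k unfolding G_def by (rule kop_meas[OF Fm Fb])
  have Glm: "Gl \<in> borel_measurable borel" unfolding Gl_def by (rule kop_meas[OF Flm Flb])
  have Gb: "\<bar>G k y\<bar> \<le> C2 * W y" for k y unfolding G_def C2_def using kop_bound2[OF Fm Fb] by simp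
  have Glb: "\<bar>Gl y\<bar> \<le> C2 * W y" for y unfolding Gl_def C2_def using kop_bound2[OF Flm Flb] by simp
  have Gconv: "(\<lambda>k. G k y) \<longlonglongrightarrow> Gl y" for y
    unfolding G_def Gl_def kop_def
  proof (rule integral_dominated_convergence[where w="\<lambda>z. (B * c0) * W z"])
    show "Fl \<in> borel_measurable (Q y)" by (rule meas_Q[OF Flm])
    show "F k \<in> borel_measurable (Q y)" for k by (rule meas_Q[OF Fm])
    show "integrable (Q y) (\<lambda>z. (B * c0) * W z)" using integrable_W by simp
    show "AE z in Q y. (\<lambda>k. F k z) \<longlonglongrightarrow> Fl z" using Flim by simp
    show "AE z in Q y. norm (F k z) \<le> (B * c0) * W z" for k using Fb by simp
  qed
  have Gtail: "\<bar>G k y\<bar> \<le> (B * c0 * \<gamma> m) * W y" if "m \<ge> 1" "y \<notin> K m" for k m y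
    unfolding G_def using kop_tail[OF Fm Fb that] by (simp add: mult_ac)
  have Gltail: "\<bar>Gl y\<bar> \<le> (B * c0 * \<gamma> m) * W y" if "m \<ge> 1" "y \<notin> K m" for m y
    unfolding Gl_def using kop_tail[OF Flm Flb that] by (simp add: mult_ac)
  define \<psi> where "\<psi> = kop Q Gl"
  have GlL: "Gl \<in> LinfW W" unfolding LinfW_def using Glm Glb by blast
  have \<psi>L: "\<psi> \<in> LinfW W" unfolding \<psi>_def by (rule kop_LinfW[OF GlL])
  have Hdiff: "kop Q (G k) x - \<psi> x = kop Q (\<lambda>y. G k y - Gl y) x" for k x
    unfolding \<psi>_def by (rule kop_diff[OF Gm Gb Glm Glb, symmetric])
  have dG: "\<bar>G k y - Gl y\<bar> \<le> (2 * C2) * W y" for k y using Gb[of k y] Glb[of y] by simp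
  have dGm: "(\<lambda>y. G k y - Gl y) \<in> borel_measurable borel" for k using Gm Glm by simp
  have key: "\<exists>N. \<forall>k\<ge>N. \<forall>x. \<bar>kop Q (G k) x - \<psi> x\<bar> \<le> \<epsilon> * W x" if eps: "\<epsilon> > 0" for \<epsilon>
  proof -
    have e1: "\<epsilon> / (4 * C2 + 1) > 0" using eps C2 by simp
    obtain M where M: "\<And>n. n \<ge> M \<Longrightarrow> dist (\<gamma> n) 0 < \<epsilon> / (4 * C2 + 1)"
      using metric_LIMSEQ_D[OF \<gamma>_lim e1] by blast
    define m where "m = max M 1"
    have m1: "m \<ge> 1" unfolding m_def by simp
    have gm: "\<gamma> m \<le> \<epsilon> / (4 * C2 + 1)" using M[of m] unfolding m_def by (simp add: dist_real_def)
    have gpos: "\<gamma> m > 0" using \<gamma>_pos[OF m1] .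
    have small: "(2 * C2) * \<gamma> m \<le> \<epsilon> / 2"
    proof -
      have "(2 * C2) * \<gamma> m \<le> (2 * C2) * (\<epsilon> / (4 * C2 + 1))" using gm C2 by (intro mult_left_mono) auto
      also have "\<dots> \<le> \<epsilon> / 2" using C2 eps by (simp add: field_simps)
      finally show ?thesis .
    qed
    have BC: "B * c0 * \<gamma> m * c0 = C2 * \<gamma> m" unfolding C2_def by simp
    obtain N where N: "\<And>k x. k \<ge> N \<Longrightarrow> x \<in> K m \<Longrightarrow> \<bar>kop Q (\<lambda>y. (G k y - Gl y) * indicator (K m) y) x\<bar> < \<epsilon> / 2"
      using unif_Km[where G=G and Gl=Gl and C=C2 and m=m and \<epsilon>="\<epsilon>/2", OF m1 Gm Glm Gb Glb Gconv] eps by auto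
    have Km: "K m \<in> sets borel" using K_compact[OF m1] by (auto intro: compact_imp_closed borel_closed)
    show ?thesis
    proof (intro exI allI impI)
      fix k x assume k: "k \<ge> N"
      show "\<bar>kop Q (G k) x - \<psi> x\<bar> \<le> \<epsilon> * W x"
      proof (cases "x \<in> K m")
        case False
        have "\<bar>kop Q (G k) x - \<psi> x\<bar> \<le> ((2 * C2) * \<gamma> m) * W x"
          unfolding Hdiff by (rule kop_tail[OF dGm dG m1 False])
        also have "\<dots> \<le> (\<epsilon> / 2) * W x" using small W_nonneg by (intro mult_right_mono) auto
        also have "\<dots> \<le> \<epsilon> * W x" using eps W_nonneg[of x] by (intro mult_right_mono) auto
        finally show ?thesis .
      next
        case True
        let ?a = "\<lambda>y. (G k y - Gl y) * indicator (K m) y"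
        let ?b = "\<lambda>y. (G k y - Gl y) * indicator (- K m) y"
        have am: "?a \<in> borel_measurable borel" using dGm Km by (intro borel_measurable_times) auto
        have bm: "?b \<in> borel_measurable borel" using dGm Km by (intro borel_measurable_times) auto
        have ab: "\<bar>?a y\<bar> \<le> (2 * C2) * W y" for y using dG[of k y] C2 W_nonneg[of y] by (auto simp: indicator_def)
        have bb: "\<bar>?b y\<bar> \<le> (2 * (B * c0 * \<gamma> m)) * W y" for y
        proof (cases "y \<in> K m")
          case True then show ?thesis using B0 c0_pos gpos W_nonneg[of y] by (auto simp: indicator_def)
        next
          case False
          then show ?thesis using Gtail[OF m1 False, of k] Gltail[OF m1 False] by (simp add: indicator_def)
        qed
        have "(\<lambda>y. G k y - Gl y) = (\<lambda>y. ?a y + ?b y)"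
          by (auto simp: indicator_def fun_eq_iff)
        then have "kop Q (\<lambda>y. G k y - Gl y) x = kop Q (\<lambda>y. ?a y + ?b y) x" by simp
        also have "\<dots> = kop Q ?a x + kop Q ?b x" by (rule kop_add[OF am ab bm bb])
        finally have split: "kop Q (G k) x - \<psi> x = kop Q ?a x + kop Q ?b x" unfolding Hdiff .
        have "\<bar>kop Q ?b x\<bar> \<le> ((2 * (B * c0 * \<gamma> m)) * c0) * W x" by (rule kop_bound2[OF bm bb])
        also have "((2 * (B * c0 * \<gamma> m)) * c0) = (2 * C2) * \<gamma> m" using BC by simp
        finally have bx: "\<bar>kop Q ?b x\<bar> \<le> ((2 * C2) * \<gamma> m) * W x" .
        have "((2 * C2) * \<gamma> m) * W x \<le> (\<epsilon> / 2) * W x" using small W_nonneg by (intro mult_right_mono) auto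
        moreover have "\<bar>kop Q ?a x\<bar> < \<epsilon> / 2" using N[OF k True] .
        moreover have "\<epsilon> / 2 \<le> (\<epsilon> / 2) * W x" using W_ge1[of x] eps by simp
        ultimately show ?thesis unfolding split using bx by (simp add: abs_le_iff abs_less_iff) linarith
      qed
    qed
  qed
  have "(\<lambda>n. normW W (kop Q (kop Q (kop Q (f (r n)))) - \<psi>)) \<longlonglongrightarrow> 0"
  proof (rule LIMSEQ_I)
    fix \<epsilon> :: real assume eps: "\<epsilon> > 0"
    obtain N where N: "\<And>k x. k \<ge> N \<Longrightarrow> \<bar>kop Q (G k) x - \<psi> x\<bar> \<le> (\<epsilon> / 2) * W x"
      using key[of "\<epsilon>/2"] eps by auto
    show "\<exists>no. \<forall>n\<ge>no. norm (normW W (kop Q (kop Q (kop Q (f (r n)))) - \<psi>) - 0) < \<epsilon>"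
    proof (intro exI allI impI)
      fix n assume n: "n \<ge> N"
      have each: "\<bar>(kop Q (kop Q (kop Q (f (r n)))) - \<psi>) x\<bar> / W x \<le> \<epsilon> / 2" for x
        using N[OF n, of x] W_pos[of x] by (simp add: G_def F_def pos_divide_le_eq)
      have le: "normW W (kop Q (kop Q (kop Q (f (r n)))) - \<psi>) \<le> \<epsilon> / 2"
        unfolding normW_def using each by (intro cSUP_least) auto
      have bdd: "bdd_above ((\<lambda>x. \<bar>(kop Q (kop Q (kop Q (f (r n)))) - \<psi>) x\<bar> / W x) ` UNIV)"
        using each by (intro bdd_aboveI[of _ "\<epsilon>/2"]) auto
      have ge: "normW W (kop Q (kop Q (kop Q (f (r n)))) - \<psi>) \<ge> 0"
        unfolding normW_def using cSUP_upper[OF UNIV_I bdd, of undefined] W_pos[of undefined]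
        by (meson abs_ge_zero divide_nonneg_pos order_trans)
      show "norm (normW W (kop Q (kop Q (kop Q (f (r n)))) - \<psi>) - 0) < \<epsilon>"
        using le ge eps by simp
    qed
  qed
  then show ?thesis using r(1) \<psi>L by blast
qed

end


theorem mainTheorem3:
  fixes Q :: "'a::polish_space \<Rightarrow> 'a measure"
    and K :: "nat \<Rightarrow> 'a set"
    and W :: "'a \<Rightarrow> real"
    and \<gamma> b \<alpha> :: "nat \<Rightarrow> real"
    and \<eta> :: "nat \<Rightarrow> 'a measure"
  assumes kernel: "kernel_op Q"
    and K_compact: "\<And>n. n \<ge> 1 \<Longrightarrow> compact (K n)"
    and K_incr: "\<And>n. n \<ge> 1 \<Longrightarrow> K n \<subseteq> K (Suc n)"
    and K_exhaust: "\<And>C. compact C \<Longrightarrow> \<exists>m\<ge>1. C \<subseteq> K m"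
    \<comment> \<open>Assumption 1 (Lyapunov)\<close>
    and W_ge1: "\<And>x. W x \<ge> 1"
    and W_meas: "W \<in> borel_measurable borel"
    and W_bdd: "\<And>C. compact C \<Longrightarrow> bounded (W ` C)"
    and \<gamma>_pos: "\<And>n. n \<ge> 1 \<Longrightarrow> \<gamma> n > 0"
    and b_pos: "\<And>n. n \<ge> 1 \<Longrightarrow> b n > 0"
    and \<gamma>_lim: "\<gamma> \<longlonglongrightarrow> 0"
    and lyap: "\<And>n x. n \<ge> 1 \<Longrightarrow>
        (\<integral>\<^sup>+ y. ennreal (W y) \<partial>(Q x)) \<le> ennreal (\<gamma> n * W x + b n * indicator (K n) x)"
    \<comment> \<open>Assumption 2 (minorization and irreducibility)\<close>
    and \<eta>_prob: "\<And>n. n \<ge> 1 \<Longrightarrow> prob_space (\<eta> n) \<and> sets (\<eta> n) = sets borel"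
    and \<alpha>_pos: "\<And>n. n \<ge> 1 \<Longrightarrow> \<alpha> n > 0"
    and minor: "\<And>n x A. n \<ge> 1 \<Longrightarrow> x \<in> K n \<Longrightarrow> A \<in> sets borel \<Longrightarrow>
        ennreal (\<alpha> n) * emeasure (\<eta> n) A \<le> emeasure (Q x) A"
    and irred: "\<And>n0 \<phi>. n0 \<ge> 1 \<Longrightarrow> \<phi> \<in> LinfW W \<Longrightarrow> (\<forall>x. \<phi> x \<ge> 0) \<Longrightarrow>
        (\<forall>n\<ge>n0. (\<integral>\<^sup>+ y. ennreal (\<phi> y) \<partial>(\<eta> n)) = 0) \<Longrightarrow>
        (\<forall>x. kop Q \<phi> x = 0)"
    \<comment> \<open>Assumption 3 (local regularity)\<close>
    and regular: "\<And>n \<phi>. n \<ge> 1 \<Longrightarrow> \<phi> \<in> borel_measurable borel \<Longrightarrow> bounded (\<phi> ` K n) \<Longrightarrow>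
        continuous_on (K n) (kop Q (\<lambda>y. \<phi> y * indicator (K n) y))"
  shows "compact_opW W (\<lambda>\<phi>. kop Q (kop Q (kop Q \<phi>)))"
proof -
  interpret qsetting3 Q K W \<gamma> b \<eta>
    by unfold_locales (fact assms)+
  show ?thesis unfolding compact_opW_def
  proof (intro conjI ballI allI impI)
    fix \<phi> assume "\<phi> \<in> LinfW W"
    then show "kop Q (kop Q (kop Q \<phi>)) \<in> LinfW W" by (intro kop_LinfW)
  next
    fix f :: "nat \<Rightarrow> 'a \<Rightarrow> real" and B :: real
    assume H: "\<forall>n. f n \<in> LinfW W \<and> normW W (f n) \<le> B"
    have fm: "f k \<in> borel_measurable borel" for k using H unfolding LinfW_def by auto
    have fb: "\<bar>f k y\<bar> \<le> B * W y" for k y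
    proof -
      obtain C where C: "\<And>z. \<bar>f k z\<bar> \<le> C * W z" using H unfolding LinfW_def by auto
      have "bdd_above ((\<lambda>x. \<bar>f k x\<bar> / W x) ` UNIV)"
        using C W_pos by (intro bdd_aboveI[of _ C]) (auto simp: pos_divide_le_eq)
      then have "\<bar>f k y\<bar> / W y \<le> normW W (f k)" unfolding normW_def by (intro cSUP_upper) auto
      also have "\<dots> \<le> B" using H by auto
      finally show ?thesis using W_pos[of y] by (simp add: pos_divide_le_eq)
    qed
    show "\<exists>r \<psi>. strict_mono r \<and> \<psi> \<in> LinfW W \<and>
           (\<lambda>n. normW W (kop Q (kop Q (kop Q (f (r n)))) - \<psi>)) \<longlonglongrightarrow> 0"
      by (rule main_seq[where f=f and B=B, OF fm fb])
  qed
qed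

end
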